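(* Let $\Psi^P\subset\mathbb C\times\mathbb C\times\mathbb C^2\times\mathbb C^3$ be the set of solutions $(d,r,\bar t,\bar x)$ of the system $$\sum_{i=1}^3(P_0x_i-P_i)^2-d^2P_0^2=0,\quad n_i(P_0x_j-P_j)-n_j(P_0x_i-P_i)=0\ (1\le i<j\le3),\quad r\,P_0\,h\,\beta-1=0,$$ (where $P_i,n_i,h,\beta$ are evaluated at $\bar t$), and let $\pi_1^P(d,r,\bar t,\bar x)=(d,\bar x)$. Then $\mathcal O_d(\Sigma)$ equals the Zariski closure of $\pi_1^P(\Psi^P)$.
   Context: $f\in\mathbb C[y_1,y_2,y_3]$ irreducible defines the surface $\Sigma$; $f_i=\partial f/\partial y_i$, $h_{\rm imp}=\sum f_i^2$, not identically zero on $\Sigma$. The generic offset $\mathcal O_d(\Sigma)\subset\mathbb C^4$ is the Zariski closure of the projection to $(d,\bar x)$ of the solutions $(d,\bar x,\bar y,u)$ of: $f(\bar y)=0$; $f_i(\bar y)(x_j-y_j)-f_j(\bar y)(x_i-y_i)=0$ ($i<j$); $\sum(x_i-y_i)^2-d^2=0$; $u\,h_{\rm imp}(\bar y)-1=0$. $P(\bar t)=(P_1/P_0,P_2/P_0,P_3/P_0)$, $\bar t=(t_1,t_2)$, $P_i\in\mathbb C[\bar t]$, $\gcd(P_0,\dots,P_3)=1$, is a (not necessarily proper) rational parametrization of $\Sigma$ (image Zariski dense). Write $\frac{\partial P}{\partial t_1}\wedge\frac{\partial P}{\partial t_2}=(A_1/A_0,A_2/A_0,A_3/A_0)$ ($\wedge$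 the cross product, $A_i\in\mathbb C[\bar t]$), $n_i=A_i/\gcd(A_1,A_2,A_3)$, $h=n_1^2+n_2^2+n_3^2$, and fix $\mu\in\mathbb N$ and a nonzero $\beta\in\mathbb C[\bar t]$ with $\gcd(\beta,P_0)=1$ such that $f_i(P(\bar t))=\beta(\bar t)P_0(\bar t)^{-\mu}n_i(\bar t)$ for $i=1,2,3$. *)

theory Defs
  imports "HOL-Analysis.Analysis"
begin

text \<open>Polynomial functions generated by a set of coordinate functions.
  Over the infinite field of complex numbers, polynomials and polynomial
  functions correspond bijectively.\<close>
inductive_set polyfun_on :: "('a \<Rightarrow> complex) set \<Rightarrow> ('a \<Rightarrow> complex) set"
  for C :: "('a \<Rightarrow> complex) set" where
  pf_const: "(\<lambda>_. c) \<in> polyfun_on C"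
| pf_coord: "g \<in> C \<Longrightarrow> g \<in> polyfun_on C"
| pf_add: "g \<in> polyfun_on C \<Longrightarrow> h \<in> polyfun_on C \<Longrightarrow> (\<lambda>x. g x + h x) \<in> polyfun_on C"
| pf_mult: "g \<in> polyfun_on C \<Longrightarrow> h \<in> polyfun_on C \<Longrightarrow> (\<lambda>x. g x * h x) \<in> polyfun_on C"

definition vcoords :: "(complex^'n \<Rightarrow> complex) set" where
  "vcoords = range (\<lambda>i x. x $ i)"

definition coords4 :: "(complex \<times> (complex^3) \<Rightarrow> complex) set" where
  "coords4 = insert fst (range (\<lambda>i p. snd p $ i))"

definition is_const :: "('a \<Rightarrow> complex) \<Rightarrow> bool" where
  "is_const g \<longleftrightarrow> (\<exists>c. g = (\<lambda>_. c))"

definition pf_dvd :: "('a \<Rightarrow> complex) set \<Rightarrow> ('a \<Rightarrow> complex) \<Rightarrow> ('a \<Rightarrow> complex) \<Rightarrow> bool" where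
  "pf_dvd C g F \<longleftrightarrow> (\<exists>q \<in> polyfun_on C. F = (\<lambda>x. g x * q x))"

text \<open>gcd of the family is 1: every common divisor is a (unit) constant.\<close>
definition pf_coprime :: "('a \<Rightarrow> complex) set \<Rightarrow> ('a \<Rightarrow> complex) set \<Rightarrow> bool" where
  "pf_coprime C Fs \<longleftrightarrow> (\<forall>g \<in> polyfun_on C. (\<forall>F \<in> Fs. pf_dvd C g F) \<longrightarrow> is_const g)"

definition pf_irreducible :: "('a \<Rightarrow> complex) set \<Rightarrow> ('a \<Rightarrow> complex) \<Rightarrow> bool" where
  "pf_irreducible C f \<longleftrightarrow> f \<in> polyfun_on C \<and> \<not> is_const f \<and>
     (\<forall>g \<in> polyfun_on C. \<forall>h \<in> polyfun_on C. f = (\<lambda>x. g x * h x) \<longrightarrow> is_const g \<or> is_const h)"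

definition zariski_closure :: "('a \<Rightarrow> complex) set \<Rightarrow> 'a set \<Rightarrow> 'a set" where
  "zariski_closure C S = {p. \<forall>g \<in> polyfun_on C. (\<forall>q \<in> S. g q = 0) \<longrightarrow> g p = 0}"

definition pderiv_v :: "'n \<Rightarrow> (complex^'n \<Rightarrow> complex) \<Rightarrow> complex^'n \<Rightarrow> complex" where
  "pderiv_v i F y = deriv (\<lambda>s. F (\<chi> j. if j = i then s else y $ j)) (y $ i)"

definition cross3c :: "complex^3 \<Rightarrow> complex^3 \<Rightarrow> complex^3" where
  "cross3c a b = vector [a$2 * b$3 - a$3 * b$2, a$3 * b$1 - a$1 * b$3, a$1 * b$2 - a$2 * b$1]"

definition offset_incidence :: "(complex^3 \<Rightarrow> complex) \<Rightarrow> (complex \<times> (complex^3)) set" where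
  "offset_incidence f = {(d, x). \<exists>y u. f y = 0 \<and>
      (\<forall>i j. pderiv_v i f y * (x$j - y$j) - pderiv_v j f y * (x$i - y$i) = 0) \<and>
      (\<Sum>i\<in>UNIV. (x$i - y$i)^2) - d^2 = 0 \<and>
      u * (\<Sum>i\<in>UNIV. (pderiv_v i f y)^2) - 1 = 0}"

definition generic_offset :: "(complex^3 \<Rightarrow> complex) \<Rightarrow> (complex \<times> (complex^3)) set" where
  "generic_offset f = zariski_closure coords4 (offset_incidence f)"

end

theory Submission imports Defs "HOL-Computational_Algebra.Polynomial" begin
lemma polyfun_comp:
  assumes "G \<in> polyfun_on C" "\<And>c. c \<in> C \<Longrightarrow> (\<lambda>x. c (\<phi> x)) \<in> polyfun_on D"
  shows "(\<lambda>x. G (\<phi> x)) \<in> polyfun_on D"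
  using assms(1)
proof (induction rule: polyfun_on.induct)
  case (pf_const c) then show ?case by (rule polyfun_on.pf_const)
next
  case (pf_coord g) then show ?case using assms(2) by blast
next
  case (pf_add g h) then show ?case using polyfun_on.pf_add by blast
next
  case (pf_mult g h) then show ?case using polyfun_on.pf_mult by blast
qed

lemma polyfun_sum:
  assumes "finite S" "\<And>i. i \<in> S \<Longrightarrow> F i \<in> polyfun_on C"
  shows "(\<lambda>x. \<Sum>i\<in>S. F i x) \<in> polyfun_on C"
  using assms
proof (induction S rule: finite_induct)
  case empty then show ?case using polyfun_on.pf_const[of 0] by simp
next
  case (insert a S)
  then show ?case using polyfun_on.pf_add[of "F a" C "\<lambda>x. \<Sum>i\<in>S. F i x"] by simp
qed

lemma polyfun_pow:
  assumes "F \<in> polyfun_on C" shows "(\<lambda>x. F x ^ k) \<in> polyfun_on C"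
proof (induction k)
  case 0 then show ?case using polyfun_on.pf_const[of 1] by simp
next
  case (Suc k) then show ?case using polyfun_on.pf_mult[OF assms Suc] by simp
qed

lemma vcoord_pf: "(\<lambda>x. x $ i) \<in> polyfun_on vcoords"
  by (rule polyfun_on.pf_coord) (auto simp: vcoords_def)

definition upd :: "'n \<Rightarrow> complex^'n \<Rightarrow> complex \<Rightarrow> complex^'n" where
  "upd i y s = (\<chi> j. if j = i then s else y $ j)"

lemma pderiv_pf:
  assumes "F \<in> polyfun_on (vcoords :: (complex^'n \<Rightarrow> complex) set)"
  shows "\<exists>F' \<in> polyfun_on vcoords. \<forall>y s. ((\<lambda>s. F (upd i y s)) has_field_derivative F' (upd i y s)) (at s)"
  using assms
proof (induction rule: polyfun_on.induct)
  case (pf_const c) then show ?case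
    by (intro bexI[of _ "\<lambda>_. 0"]) (auto intro!: polyfun_on.pf_const derivative_eq_intros)
next
  case (pf_coord g)
  then obtain k where g: "g = (\<lambda>x. x $ k)" by (auto simp: vcoords_def)
  show ?case
  proof (cases "k = i")
    case True then show ?thesis
      by (intro bexI[of _ "\<lambda>_. 1"]) (auto simp: g upd_def intro!: polyfun_on.pf_const derivative_eq_intros)
  next
    case False then show ?thesis
      by (intro bexI[of _ "\<lambda>_. 0"]) (auto simp: g upd_def intro!: polyfun_on.pf_const derivative_eq_intros)
  qed
next
  case (pf_add g h)
  then obtain g' h' where g': "g' \<in> polyfun_on vcoords" "\<forall>y s. ((\<lambda>s. g (upd i y s)) has_field_derivative g' (upd i y s)) (at s)"
    and h': "h' \<in> polyfun_on vcoords" "\<forall>y s. ((\<lambda>s. h (upd i y s)) has_field_derivative h' (upd i y s)) (at s)" by blast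
  show ?case
  proof (intro bexI[of _ "\<lambda>x. g' x + h' x"] allI)
    fix y s show "((\<lambda>s. g (upd i y s) + h (upd i y s)) has_field_derivative g' (upd i y s) + h' (upd i y s)) (at s)"
      using DERIV_add[OF g'(2)[rule_format, of y s] h'(2)[rule_format, of y s]] .
  qed (intro polyfun_on.pf_add g' h')+
next
  case (pf_mult g h)
  then obtain g' h' where g': "g' \<in> polyfun_on vcoords" "\<forall>y s. ((\<lambda>s. g (upd i y s)) has_field_derivative g' (upd i y s)) (at s)"
    and h': "h' \<in> polyfun_on vcoords" "\<forall>y s. ((\<lambda>s. h (upd i y s)) has_field_derivative h' (upd i y s)) (at s)" by blast
  show ?case
  proof (intro bexI[of _ "\<lambda>x. g' x * h x + h' x * g x"] allI)
    fix y s show "((\<lambda>s. g (upd i y s) * h (upd i y s)) has_field_derivative g' (upd i y s) * h (upd i y s) + h' (upd i y s) * g (upd i y s)) (at s)"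
      using DERIV_mult[OF g'(2)[rule_format, of y s] h'(2)[rule_format, of y s]] .
  qed (intro polyfun_on.pf_add polyfun_on.pf_mult pf_mult g' h')+
qed

lemma pderiv_v_pf:
  assumes "F \<in> polyfun_on (vcoords :: (complex^'n \<Rightarrow> complex) set)"
  shows "(\<lambda>y. pderiv_v i F y) \<in> polyfun_on vcoords"
proof -
  obtain F' where F': "F' \<in> polyfun_on vcoords" "\<forall>y s. ((\<lambda>s. F (upd i y s)) has_field_derivative F' (upd i y s)) (at s)"
    using pderiv_pf[OF assms] by blast
  have "pderiv_v i F y = F' y" for y
  proof -
    have "upd i y (y $ i) = y" by (simp add: upd_def vec_eq_iff)
    then show ?thesis using DERIV_imp_deriv[OF F'(2)[rule_format, of y "y$i"]]
      by (simp add: pderiv_v_def upd_def)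
  qed
  then show ?thesis using F'(1) by simp
qed

lemma line_pf:
  assumes "F \<in> polyfun_on (vcoords :: (complex^'n \<Rightarrow> complex) set)"
  shows "\<exists>p. \<forall>s. F (\<chi> j. a$j + s * b$j) = poly p s"
  using assms
proof (induction rule: polyfun_on.induct)
  case (pf_const c) then show ?case by (intro exI[of _ "[:c:]"]) simp
next
  case (pf_coord g)
  then obtain k where g: "g = (\<lambda>x. x $ k)" by (auto simp: vcoords_def)
  show ?case by (intro exI[of _ "[:a$k, b$k:]"]) (simp add: g algebra_simps)
next
  case (pf_add g h)
  then obtain p q where "\<forall>s. g (\<chi> j. a$j + s * b$j) = poly p s" "\<forall>s. h (\<chi> j. a$j + s * b$j) = poly q s" by blast
  then show ?case by (intro exI[of _ "p + q"]) simp
next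
  case (pf_mult g h)
  then obtain p q where "\<forall>s. g (\<chi> j. a$j + s * b$j) = poly p s" "\<forall>s. h (\<chi> j. a$j + s * b$j) = poly q s" by blast
  then show ?case by (intro exI[of _ "p * q"]) simp
qed

lemma pf_zero_on_ball:
  assumes "F \<in> polyfun_on (vcoords :: (complex^'n \<Rightarrow> complex) set)"
    and "r > 0" and "\<And>t. t \<in> ball t0 r \<Longrightarrow> F t = 0"
  shows "F t = 0"
proof (cases "t = t0")
  case True then show ?thesis using assms by simp
next
  case False
  define b where "b = t - t0"
  have nb: "norm b > 0" using False by (simp add: b_def)
  obtain p where p: "\<And>s. F (\<chi> j. t0$j + s * b$j) = poly p s" using line_pf[OF assms(1)] by blast
  have eq: "(\<chi> j. t0$j + of_real \<tau> * b$j) = t0 + \<tau> *\<^sub>R b" for \<tau>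
    by (simp add: vec_eq_iff) (simp add: scaleR_conv_of_real)
  have "of_real ` {0<..<r / norm b} \<subseteq> {x. poly p x = 0}"
  proof
    fix z :: complex assume "z \<in> of_real ` {0<..<r / norm b}"
    then obtain \<tau> where \<tau>: "z = of_real \<tau>" "0 < \<tau>" "\<tau> < r / norm b" by auto
    have "dist t0 (t0 + \<tau> *\<^sub>R b) = \<tau> * norm b" using \<tau> by (simp add: dist_norm)
    also have "\<dots> < r" using \<tau> nb by (simp add: pos_less_divide_eq)
    finally have "F (t0 + \<tau> *\<^sub>R b) = 0" using assms(3) by simp
    then show "z \<in> {x. poly p x = 0}" using p[of z] eq[of \<tau>] \<tau> by simp
  qed
  moreover have "infinite (of_real ` {0<..<r / norm b} :: complex set)"
    using nb assms(2) by (subst finite_image_iff) (auto simp: inj_on_def)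
  ultimately have "infinite {x. poly p x = 0}" using finite_subset by blast
  then have "p = 0" using poly_roots_finite by blast
  then have "F (\<chi> j. t0$j + 1 * b$j) = 0" using p[of 1] by simp
  moreover have "(\<chi> j. t0$j + 1 * b$j) = t" by (simp add: vec_eq_iff b_def)
  ultimately show ?thesis by simp
qed

lemma pf_cont:
  assumes "F \<in> polyfun_on (vcoords :: (complex^'n \<Rightarrow> complex) set)"
  shows "continuous_on UNIV F"
  using assms
proof (induction rule: polyfun_on.induct)
  case (pf_coord g)
  then obtain k where g: "g = (\<lambda>x. x $ k)" by (auto simp: vcoords_def)
  show ?case unfolding g by (intro continuous_intros)
qed (auto intro!: continuous_intros)

lemma pf_mult_nz:
  assumes "F \<in> polyfun_on (vcoords :: (complex^'n \<Rightarrow> complex) set)" "G \<in> polyfun_on vcoords"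
    and "F \<noteq> (\<lambda>_. 0)" "G \<noteq> (\<lambda>_. 0)"
  shows "(\<lambda>x. F x * G x) \<noteq> (\<lambda>_. 0)"
proof -
  obtain t1 where t1: "F t1 \<noteq> 0" using assms(3) by auto
  have "open {x. F x \<noteq> 0}"
    by (rule open_Collect_neq[OF pf_cont[OF assms(1)]]) (rule continuous_on_const)
  then obtain e where e: "e > 0" "ball t1 e \<subseteq> {x. F x \<noteq> 0}" using t1 open_contains_ball by blast
  obtain t2 where t2: "t2 \<in> ball t1 e" "G t2 \<noteq> 0"
    using pf_zero_on_ball[OF assms(2) e(1)] assms(4) by blast
  then show ?thesis using e(2) by (auto simp: fun_eq_iff)
qed

lemma pf_dense:
  assumes "F \<in> polyfun_on (vcoords :: (complex^'n \<Rightarrow> complex) set)" "F \<noteq> (\<lambda>_. 0)" "e > 0"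
  shows "\<exists>t'. t' \<in> ball t e \<and> F t' \<noteq> 0"
  using pf_zero_on_ball[OF assms(1) assms(3)] assms(2) by blast

lemma decomp_d:
  assumes "p \<in> polyfun_on coords4"
  shows "\<exists>A \<in> polyfun_on coords4. \<exists>B \<in> polyfun_on coords4. \<forall>d x. p (d, x) = A (d^2, x) + d * B (d^2, x)"
  using assms
proof (induction rule: polyfun_on.induct)
  case (pf_const c) then show ?case
    by (intro bexI[of _ "\<lambda>_. c"] bexI[of _ "\<lambda>_. 0"]) (auto intro: polyfun_on.pf_const)
next
  case (pf_coord g)
  then consider "g = fst" | k where "g = (\<lambda>p. snd p $ k)" by (auto simp: coords4_def)
  then show ?case
  proof cases
    case 1 then show ?thesis
      by (intro bexI[of _ "\<lambda>_. 0"] bexI[of _ "\<lambda>_. 1"]) (auto intro: polyfun_on.pf_const)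
  next
    case 2 then show ?thesis
      by (intro bexI[of _ "\<lambda>p. snd p $ k"] bexI[of _ "\<lambda>_. 0"]) (auto intro: polyfun_on.pf_const polyfun_on.pf_coord simp: coords4_def)
  qed
next
  case (pf_add g h)
  then obtain A1 B1 A2 B2 where 1: "A1 \<in> polyfun_on coords4" "B1 \<in> polyfun_on coords4" "\<forall>d x. g (d, x) = A1 (d^2, x) + d * B1 (d^2, x)"
    and 2: "A2 \<in> polyfun_on coords4" "B2 \<in> polyfun_on coords4" "\<forall>d x. h (d, x) = A2 (d^2, x) + d * B2 (d^2, x)" by blast
  show ?case
    by (intro bexI[of _ "\<lambda>p. A1 p + A2 p"] bexI[of _ "\<lambda>p. B1 p + B2 p"] polyfun_on.pf_add 1 2)
      (simp add: 1(3) 2(3) algebra_simps)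
next
  case (pf_mult g h)
  then obtain A1 B1 A2 B2 where 1: "A1 \<in> polyfun_on coords4" "B1 \<in> polyfun_on coords4" "\<forall>d x. g (d, x) = A1 (d^2, x) + d * B1 (d^2, x)"
    and 2: "A2 \<in> polyfun_on coords4" "B2 \<in> polyfun_on coords4" "\<forall>d x. h (d, x) = A2 (d^2, x) + d * B2 (d^2, x)" by blast
  have fpf: "fst \<in> polyfun_on coords4" by (rule polyfun_on.pf_coord) (simp add: coords4_def)
  show ?case
    by (intro bexI[of _ "\<lambda>p. A1 p * A2 p + fst p * (B1 p * B2 p)"] bexI[of _ "\<lambda>p. A1 p * B2 p + B1 p * A2 p"]
        polyfun_on.pf_add polyfun_on.pf_mult 1 2 fpf allI)
      (simp add: 1(3) 2(3) algebra_simps power2_eq_square)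
qed

lemma zc_sub:
  assumes "A \<subseteq> zariski_closure C B" shows "zariski_closure C A \<subseteq> zariski_closure C B"
  using assms unfolding zariski_closure_def by blast

lemma zc_incl: "A \<subseteq> zariski_closure C A"
  unfolding zariski_closure_def by blast

lemma parallel3:
  fixes v w :: "complex^3"
  assumes H: "(\<Sum>i\<in>UNIV. (v$i)^2) \<noteq> 0" and cr: "\<And>i j. v$i * w$j - v$j * w$i = 0"
  shows "w$j = ((\<Sum>i\<in>UNIV. v$i * w$i) / (\<Sum>i\<in>UNIV. (v$i)^2)) * v$j"
proof -
  have "(\<Sum>i\<in>UNIV. (v$i)^2) * w$j = (\<Sum>i\<in>UNIV. v$i * (v$i * w$j))"
    by (simp add: sum_distrib_right power2_eq_square mult.assoc)
  also have "\<dots> = (\<Sum>i\<in>UNIV. v$i * (v$j * w$i))"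
    using cr by (intro sum.cong refl) (metis eq_iff_diff_eq_0)
  also have "\<dots> = v$j * (\<Sum>i\<in>UNIV. v$i * w$i)"
    by (simp add: sum_distrib_left algebra_simps)
  finally show ?thesis using H by (simp add: field_simps)
qed

theorem mainTheorem13:
  fixes f :: "complex^3 \<Rightarrow> complex"
    and P0 :: "complex^2 \<Rightarrow> complex" and P :: "3 \<Rightarrow> complex^2 \<Rightarrow> complex"
    and A0 :: "complex^2 \<Rightarrow> complex" and A :: "3 \<Rightarrow> complex^2 \<Rightarrow> complex"
    and g :: "complex^2 \<Rightarrow> complex" and n :: "3 \<Rightarrow> complex^2 \<Rightarrow> complex"
    and h :: "complex^2 \<Rightarrow> complex" and \<beta> :: "complex^2 \<Rightarrow> complex" and \<mu> :: nat
  assumes f_irr: "pf_irreducible vcoords f"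
    and himp_nz: "\<exists>y. f y = 0 \<and> (\<Sum>i\<in>UNIV. (pderiv_v i f y)^2) \<noteq> 0"
    and P0_pf: "P0 \<in> polyfun_on vcoords" and P_pf: "\<And>i. P i \<in> polyfun_on vcoords"
    and P0_nz: "P0 \<noteq> (\<lambda>_. 0)"
    and P_gcd: "pf_coprime vcoords (insert P0 (range P))"
    and P_on: "\<And>t. P0 t \<noteq> 0 \<Longrightarrow> f (\<chi> i. P i t / P0 t) = 0"
    and P_dense: "zariski_closure vcoords {(\<chi> i. P i t / P0 t) | t. P0 t \<noteq> 0} = {y. f y = 0}"
    and A0_pf: "A0 \<in> polyfun_on vcoords" and A_pf: "\<And>i. A i \<in> polyfun_on vcoords"
    and A0_nz: "A0 \<noteq> (\<lambda>_. 0)"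
    and A_cross: "\<And>t i. P0 t \<noteq> 0 \<Longrightarrow> A0 t \<noteq> 0 \<Longrightarrow>
        cross3c (\<chi> k. pderiv_v 1 (\<lambda>s. P k s / P0 s) t) (\<chi> k. pderiv_v 2 (\<lambda>s. P k s / P0 s) t) $ i
          = A i t / A0 t"
    and g_pf: "g \<in> polyfun_on vcoords" and g_nz: "g \<noteq> (\<lambda>_. 0)"
    and n_pf: "\<And>i. n i \<in> polyfun_on vcoords"
    and A_n: "\<And>i. A i = (\<lambda>t. g t * n i t)"
    and n_gcd: "pf_coprime vcoords (range n)"
    and h_def: "h = (\<lambda>t. \<Sum>i\<in>UNIV. (n i t)^2)"
    and \<beta>_pf: "\<beta> \<in> polyfun_on vcoords" and \<beta>_nz: "\<beta> \<noteq> (\<lambda>_. 0)"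
    and \<beta>_P0: "pf_coprime vcoords {\<beta>, P0}"
    and f_grad: "\<And>t i. P0 t \<noteq> 0 \<Longrightarrow>
        pderiv_v i f (\<chi> k. P k t / P0 t) = \<beta> t * inverse (P0 t ^ \<mu>) * n i t"
  shows "generic_offset f = zariski_closure coords4
     {(d, x). \<exists>r t. (\<Sum>i\<in>UNIV. (P0 t * x$i - P i t)^2) - d^2 * (P0 t)^2 = 0 \<and>
        (\<forall>i j. n i t * (P0 t * x$j - P j t) - n j t * (P0 t * x$i - P i t) = 0) \<and>
        r * P0 t * h t * \<beta> t - 1 = 0}"
proof -
  define S1 where "S1 = offset_incidence f"
  define S2 where "S2 = {(d, x). \<exists>r t. (\<Sum>i\<in>UNIV. (P0 t * x$i - P i t)^2) - d^2 * (P0 t)^2 = 0 \<and>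
        (\<forall>i j. n i t * (P0 t * x$j - P j t) - n j t * (P0 t * x$i - P i t) = 0) \<and>
        r * P0 t * h t * \<beta> t - 1 = 0}"
  have f_pf: "f \<in> polyfun_on vcoords" using f_irr by (simp add: pf_irreducible_def)
  have v_pf: "\<And>i. (\<lambda>y. pderiv_v i f y) \<in> polyfun_on vcoords" using pderiv_v_pf[OF f_pf] .
  define H where "H = (\<lambda>y. \<Sum>i\<in>UNIV. (pderiv_v i f y)^2)"
  have H_pf: "H \<in> polyfun_on vcoords" unfolding H_def by (intro polyfun_sum polyfun_pow v_pf) simp
  define yt where "yt = (\<lambda>t. (\<chi> i. P i t / P0 t) :: complex^3)"
  have img: "q y = 0" if q: "q \<in> polyfun_on vcoords" and z: "\<And>t. P0 t \<noteq> 0 \<Longrightarrow> q (yt t) = 0"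
      and fy: "f y = 0" for q y
  proof -
    have "y \<in> zariski_closure vcoords {(\<chi> i. P i t / P0 t) | t. P0 t \<noteq> 0}" using P_dense fy by simp
    then show "q y = 0" using q z unfolding zariski_closure_def yt_def by auto
  qed
  have grad: "\<And>t i. P0 t \<noteq> 0 \<Longrightarrow> pderiv_v i f (yt t) = \<beta> t * inverse (P0 t ^ \<mu>) * n i t"
    using f_grad by (simp add: yt_def)
  have H_yt: "\<And>t. P0 t \<noteq> 0 \<Longrightarrow> H (yt t) = (\<beta> t * inverse (P0 t ^ \<mu>))^2 * h t"
    by (simp add: H_def grad h_def power_mult_distrib sum_distrib_left)
  have h_pf: "h \<in> polyfun_on vcoords" unfolding h_def by (intro polyfun_sum polyfun_pow n_pf) simp
  have h_nz: "h \<noteq> (\<lambda>_. 0)"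
  proof
    assume h0: "h = (\<lambda>_. 0)"
    obtain y where y: "f y = 0" "H y \<noteq> 0" using himp_nz H_def by auto
    moreover have "H y = 0" by (rule img[OF H_pf _ y(1)]) (simp add: H_yt h0)
    ultimately show False by simp
  qed
  have w_nz: "(\<lambda>t. P0 t * h t * \<beta> t) \<noteq> (\<lambda>_. 0)"
    using pf_mult_nz[OF polyfun_on.pf_mult[OF P0_pf h_pf] \<beta>_pf pf_mult_nz[OF P0_pf h_pf P0_nz h_nz] \<beta>_nz] .
  have w_pf: "(\<lambda>t. P0 t * h t * \<beta> t) \<in> polyfun_on vcoords" by (intro polyfun_on.pf_mult P0_pf h_pf \<beta>_pf)
  have img2: "q y = 0" if q: "q \<in> polyfun_on vcoords"
     and z: "\<And>t. P0 t \<noteq> 0 \<Longrightarrow> h t \<noteq> 0 \<Longrightarrow> \<beta> t \<noteq> 0 \<Longrightarrow> q (yt t) = 0" and fy: "f y = 0" for q y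
  proof (rule img[OF q _ fy], rule ccontr)
    fix t assume P0t: "P0 t \<noteq> 0" and qt: "q (yt t) \<noteq> 0"
    define U where "U = {s. P0 s \<noteq> 0}"
    have oU: "open U" unfolding U_def by (rule open_Collect_neq[OF pf_cont[OF P0_pf]]) (rule continuous_on_const)
    have cP: "\<And>i. continuous_on U (P i)" using pf_cont[OF P_pf] continuous_on_subset by blast
    have cP0: "continuous_on U P0" using pf_cont[OF P0_pf] continuous_on_subset by blast
    have "continuous_on U (\<lambda>s. q (yt s))"
      unfolding yt_def
      by (rule continuous_on_compose2[OF pf_cont[OF q]]) (auto intro!: continuous_intros cP[unfolded U_def] cP0[unfolded U_def] simp: U_def)
    then have ic: "isCont (\<lambda>s. q (yt s)) t" using oU P0t continuous_on_eq_continuous_at U_def by blast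
    obtain e where e: "e > 0" "\<forall>s. dist t s < e \<longrightarrow> q (yt s) \<noteq> 0"
      using continuous_at_avoid[of t "\<lambda>s. q (yt s)" 0, OF ic qt] by blast
    obtain s where "s \<in> ball t e" "P0 s * h s * \<beta> s \<noteq> 0" using pf_dense[OF w_pf w_nz e(1)] by blast
    then show False using e z by auto
  qed
  have S21: "S2 \<subseteq> S1"
  proof
    fix p assume "p \<in> S2"
    then obtain d x r t where p: "p = (d,x)" and e1: "(\<Sum>i\<in>UNIV. (P0 t * x$i - P i t)^2) - d^2 * (P0 t)^2 = 0"
      and e2: "\<forall>i j. n i t * (P0 t * x$j - P j t) - n j t * (P0 t * x$i - P i t) = 0"
      and e3: "r * P0 t * h t * \<beta> t - 1 = 0" unfolding S2_def by blast
    have nz: "P0 t \<noteq> 0" "h t \<noteq> 0" "\<beta> t \<noteq> 0" using e3 by auto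
    define c where "c = \<beta> t * inverse (P0 t ^ \<mu>)"
    have c: "c \<noteq> 0" using nz by (simp add: c_def)
    define y where "y = yt t"
    have fy: "f y = 0" using P_on nz by (simp add: y_def yt_def)
    have gy: "\<And>i. pderiv_v i f y = c * n i t" using grad nz by (simp add: y_def c_def)
    have yi: "\<And>i. y$i = P i t / P0 t" by (simp add: y_def yt_def)
    have cr: "\<forall>i j. pderiv_v i f y * (x$j - y$j) - pderiv_v j f y * (x$i - y$i) = 0"
    proof (intro allI)
      fix i j
      have "pderiv_v i f y * (x$j - y$j) - pderiv_v j f y * (x$i - y$i) = c / P0 t * (n i t * (P0 t * x$j - P j t) - n j t * (P0 t * x$i - P i t))"
        using nz by (simp add: gy yi field_simps)
      then show "pderiv_v i f y * (x$j - y$j) - pderiv_v j f y * (x$i - y$i) = 0" using e2 by simp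
    qed
    have sq: "(\<Sum>i\<in>UNIV. (x$i - y$i)^2) - d^2 = 0"
    proof -
      have "(\<Sum>i\<in>UNIV. (x$i - y$i)^2) = (\<Sum>i\<in>UNIV. (P0 t * x$i - P i t)^2 / (P0 t)^2)"
        using nz by (intro sum.cong refl) (simp add: yi field_simps)
      also have "\<dots> = (\<Sum>i\<in>UNIV. (P0 t * x$i - P i t)^2) / (P0 t)^2" by (simp add: sum_divide_distrib)
      also have "\<dots> = d^2" using e1 nz by (simp add: field_simps)
      finally show ?thesis by simp
    qed
    have uh: "(1 / (c^2 * h t)) * (\<Sum>i\<in>UNIV. (pderiv_v i f y)^2) - 1 = 0"
      using nz c by (simp add: gy h_def power_mult_distrib sum_distrib_left[symmetric])
    show "p \<in> S1" unfolding S1_def offset_incidence_def p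
      using fy cr sq uh by blast
  qed
  have S12: "S1 \<subseteq> zariski_closure coords4 S2"
  proof
    fix p assume "p \<in> S1"
    then obtain d0 x0 y0 u where p: "p = (d0,x0)" and fy0: "f y0 = 0"
      and cr: "\<forall>i j. pderiv_v i f y0 * (x0$j - y0$j) - pderiv_v j f y0 * (x0$i - y0$i) = 0"
      and sq: "(\<Sum>i\<in>UNIV. (x0$i - y0$i)^2) - d0^2 = 0"
      and uH: "u * (\<Sum>i\<in>UNIV. (pderiv_v i f y0)^2) - 1 = 0"
      unfolding S1_def offset_incidence_def by blast
    have H0: "H y0 \<noteq> 0" using uH H_def by auto
    define l0 where "l0 = (\<Sum>i\<in>UNIV. pderiv_v i f y0 * (x0$i - y0$i)) / H y0"
    have x0: "\<And>j. x0$j - y0$j = l0 * pderiv_v j f y0"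
    proof -
      fix j
      show "x0$j - y0$j = l0 * pderiv_v j f y0"
        using parallel3[of "\<chi> i. pderiv_v i f y0" "x0 - y0" j] H0 cr
        by (simp add: H_def l0_def)
    qed
    have d0: "d0^2 = l0^2 * H y0"
    proof -
      have "d0^2 = (\<Sum>i\<in>UNIV. (x0$i - y0$i)^2)" using sq by simp
      also have "\<dots> = l0^2 * H y0" by (simp add: x0 H_def power_mult_distrib sum_distrib_left)
      finally show ?thesis .
    qed
    show "p \<in> zariski_closure coords4 S2"
      unfolding zariski_closure_def p
    proof (intro CollectI ballI impI)
      fix G assume G: "G \<in> polyfun_on coords4" and GS: "\<forall>q\<in>S2. G q = 0"
      define \<Phi> where "\<Phi> = (\<lambda>q. G (fst q, \<chi> j. snd q $ j + l0 * pderiv_v j f (snd q)))"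
      have sndc: "(\<lambda>q. snd q $ j) \<in> polyfun_on coords4" for j
        by (rule polyfun_on.pf_coord) (simp add: coords4_def)
      have fstc: "fst \<in> polyfun_on coords4"
        by (rule polyfun_on.pf_coord) (simp add: coords4_def)
      have vs: "(\<lambda>q. pderiv_v j f (snd q)) \<in> polyfun_on coords4" for j
        by (rule polyfun_comp[OF v_pf]) (auto simp: vcoords_def sndc)
      have \<Phi>_pf: "\<Phi> \<in> polyfun_on coords4"
        unfolding \<Phi>_def
      proof (rule polyfun_comp[OF G])
        fix c :: "complex \<times> (complex^3) \<Rightarrow> complex" assume "c \<in> coords4"
        then consider "c = fst" | k where "c = (\<lambda>p. snd p $ k)" by (auto simp: coords4_def)
        then show "(\<lambda>x. c (fst x, \<chi> j. snd x $ j + l0 * pderiv_v j f (snd x))) \<in> polyfun_on coords4"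
        proof cases
          case 1 then show ?thesis using fstc by simp
        next
          case 2 then show ?thesis
            by (simp add: polyfun_on.pf_add polyfun_on.pf_mult polyfun_on.pf_const sndc vs)
        qed
      qed
      obtain A B where A: "A \<in> polyfun_on coords4" and B: "B \<in> polyfun_on coords4"
        and AB: "\<forall>d y. \<Phi> (d,y) = A (d^2,y) + d * B (d^2,y)" using decomp_d[OF \<Phi>_pf] by blast
      define a where "a = (\<lambda>y. A (l0^2 * H y, y))"
      define b where "b = (\<lambda>y. B (l0^2 * H y, y))"
      have comp_ok: "(\<lambda>x. c (l0^2 * H x, x)) \<in> polyfun_on vcoords" if "c \<in> coords4" for c
      proof -
        from that consider "c = fst" | k where "c = (\<lambda>p. snd p $ k)" by (auto simp: coords4_def)
        then show ?thesis
        proof cases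
          case 1 then show ?thesis by (simp add: polyfun_on.pf_mult polyfun_on.pf_const H_pf)
        next
          case 2 then show ?thesis by (simp add: vcoord_pf)
        qed
      qed
      have a_pf: "a \<in> polyfun_on vcoords" unfolding a_def by (rule polyfun_comp[OF A comp_ok])
      have b_pf: "b \<in> polyfun_on vcoords" unfolding b_def by (rule polyfun_comp[OF B comp_ok])
      have key: "\<Phi> (d, yt t) = 0" if nz: "P0 t \<noteq> 0" "h t \<noteq> 0" "\<beta> t \<noteq> 0" and dd: "d^2 = l0^2 * H (yt t)" for t d
      proof -
        define c where "c = \<beta> t * inverse (P0 t ^ \<mu>)"
        define x where "x = (\<chi> j. yt t $ j + l0 * pderiv_v j f (yt t))"
        have xi: "\<And>i. P0 t * x$i - P i t = P0 t * l0 * c * n i t"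
          using nz by (simp add: x_def grad c_def) (simp add: yt_def field_simps)
        have Hc: "H (yt t) = c^2 * h t" using H_yt nz by (simp add: c_def)
        have "(d, x) \<in> S2"
          unfolding S2_def
        proof (simp only: mem_Collect_eq prod.case, intro exI conjI allI)
          show "(\<Sum>i\<in>UNIV. (P0 t * x$i - P i t)^2) - d^2 * (P0 t)^2 = 0"
            by (simp add: xi dd Hc h_def power_mult_distrib sum_distrib_left algebra_simps)
          fix i j show "n i t * (P0 t * x$j - P j t) - n j t * (P0 t * x$i - P i t) = 0"
            by (simp add: xi algebra_simps)
        next
          show "1 / (P0 t * h t * \<beta> t) * P0 t * h t * \<beta> t - 1 = 0" using nz by simp
        qed
        then show ?thesis using GS by (simp add: \<Phi>_def x_def)
      qed
      have ab: "a (yt t) = 0 \<and> (l0 \<noteq> 0 \<longrightarrow> b (yt t) = 0)" if nz: "P0 t \<noteq> 0" "h t \<noteq> 0" "\<beta> t \<noteq> 0" for t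
      proof -
        define \<delta> where "\<delta> = csqrt (l0^2 * H (yt t))"
        have \<delta>: "\<delta>^2 = l0^2 * H (yt t)" by (simp add: \<delta>_def)
        have m\<delta>: "(-\<delta>)^2 = l0^2 * H (yt t)" by (simp add: \<delta>_def)
        have 1: "A (\<delta>^2, yt t) + \<delta> * B (\<delta>^2, yt t) = 0" using key[OF nz \<delta>] AB by simp
        have 2: "A (\<delta>^2, yt t) - \<delta> * B (\<delta>^2, yt t) = 0" using key[OF nz m\<delta>] AB by simp
        have "2 * A (\<delta>^2, yt t) = (A (\<delta>^2, yt t) + \<delta> * B (\<delta>^2, yt t)) + (A (\<delta>^2, yt t) - \<delta> * B (\<delta>^2, yt t))"
          by simp
        then have aa: "A (\<delta>^2, yt t) = 0" using 1 2 by simp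
        have bb: "\<delta> * B (\<delta>^2, yt t) = 0" using 1 aa by simp
        show ?thesis
        proof
          show "a (yt t) = 0" using aa \<delta> by (simp add: a_def)
          show "l0 \<noteq> 0 \<longrightarrow> b (yt t) = 0"
          proof
            assume "l0 \<noteq> 0"
            moreover have "H (yt t) \<noteq> 0" using H_yt nz by simp
            ultimately have "\<delta> \<noteq> 0" using \<delta> by auto
            then show "b (yt t) = 0" using bb \<delta> by (simp add: b_def)
          qed
        qed
      qed
      have ay0: "a y0 = 0" by (rule img2[OF a_pf _ fy0]) (use ab in blast)
      have by0: "l0 \<noteq> 0 \<Longrightarrow> b y0 = 0" by (rule img2[OF b_pf _ fy0]) (use ab in blast)
      have "(\<chi> j. y0 $ j + l0 * pderiv_v j f y0) = x0"
        by (simp add: vec_eq_iff x0[symmetric])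
      then have "G (d0, x0) = \<Phi> (d0, y0)" by (simp add: \<Phi>_def)
      also have "\<dots> = A (d0^2, y0) + d0 * B (d0^2, y0)" using AB by simp
      also have "\<dots> = a y0 + d0 * b y0" using d0 by (simp add: a_def b_def)
      finally have Geq: "G (d0, x0) = a y0 + d0 * b y0" .
      show "G (d0, x0) = 0"
      proof (cases "l0 = 0")
        case True then have "d0 = 0" using d0 by simp
        then show ?thesis using Geq ay0 by simp
      qed (use Geq ay0 by0 in simp)
    qed
  qed
  have "zariski_closure coords4 S1 = zariski_closure coords4 S2"
    using zc_sub[OF S12] zc_sub[of S2 coords4 S1] S21 zc_incl[of S1 coords4] by blast
  then show ?thesis unfolding generic_offset_def S1_def S2_def .
qed

end
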